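(* Let $(M_n)_{n\in\mathbb N}$ be a submartingale with respect to a filtration $(\mathcal F_n)_{n\in\mathbb N}$, with $M_0=0$. Suppose there is $\alpha>0$ such that for every $n\in\mathbb N$, $\mathbb E[e^{\alpha\sum_{k=1}^n|\Delta_kM|}]<\infty$. Then, for every $a>0$ and every $\lambda>0$ small enough, the sequence $$\Big(\exp\big(\lambda M_n-\tfrac{\mathfrak f(\lambda a)}{a^2}G_n^a\big)\Big)_{n\in\mathbb N}$$ is a submartingale with respect to $(\mathcal F_n)$.
   Context: $\Delta_nM=M_n-M_{n-1}$; $\mathfrak f(\lambda)=e^{-\lambda}-1+\lambda$; for $a>0$, $G_n^a=\sum_{i=1}^n\mathbb E[(\Delta_iM)^2\mathbf 1_{|\Delta_iM|\le a}\mid\mathcal F_{i-1}]-a\sum_{i=1}^n|\Delta_iM|\mathbf 1_{|\Delta_iM|\ge a}$. A submartingale is an adapted integrable sequence with $\mathbb E[\Delta_nM\mid\mathcal F_{n-1}]\ge0$. *)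

theory Defs
  imports "HOL-Probability.Probability"
begin

definition filtration :: "'a measure \<Rightarrow> (nat \<Rightarrow> 'a measure) \<Rightarrow> bool" where
  "filtration M F \<longleftrightarrow> (\<forall>n. subalgebra M (F n)) \<and> (\<forall>n. sets (F n) \<subseteq> sets (F (Suc n)))"

definition incr :: "(nat \<Rightarrow> 'a \<Rightarrow> real) \<Rightarrow> nat \<Rightarrow> 'a \<Rightarrow> real" where
  "incr X n x = X n x - X (n - 1) x"

definition submartingale :: "'a measure \<Rightarrow> (nat \<Rightarrow> 'a measure) \<Rightarrow> (nat \<Rightarrow> 'a \<Rightarrow> real) \<Rightarrow> bool" where
  "submartingale M F X \<longleftrightarrow>
     (\<forall>n. X n \<in> borel_measurable (F n)) \<and> (\<forall>n. integrable M (X n)) \<and>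
     (\<forall>n\<ge>1. AE x in M. real_cond_exp M (F (n - 1)) (incr X n) x \<ge> 0)"

definition frak_f :: "real \<Rightarrow> real" where
  "frak_f t = exp (- t) - 1 + t"

definition G :: "'a measure \<Rightarrow> (nat \<Rightarrow> 'a measure) \<Rightarrow> (nat \<Rightarrow> 'a \<Rightarrow> real) \<Rightarrow> real \<Rightarrow> nat \<Rightarrow> 'a \<Rightarrow> real" where
  "G M F X a n x =
     (\<Sum>i\<in>{1..n}. real_cond_exp M (F (i - 1))
         (\<lambda>y. (incr X i y)\<^sup>2 * indicator {y. \<bar>incr X i y\<bar> \<le> a} y) x)
     - a * (\<Sum>i\<in>{1..n}. \<bar>incr X i x\<bar> * indicator {y. \<bar>incr X i y\<bar> \<ge> a} x)"

end

theory Submission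
  imports Defs
begin

lemma nonneg_by_deriv:
  fixes h h' :: "real \<Rightarrow> real"
  assumes "h 0 = 0" "\<And>x. (h has_real_derivative h' x) (at x)" "\<And>x. 0 \<le> x \<Longrightarrow> h' x \<ge> 0" "0 \<le> y"
  shows "h y \<ge> 0"
  using deriv_nonneg_imp_mono[of 0 y h h'] assms by auto

lemma R1: fixes t :: real assumes t: "0 \<le> t" shows "2 * exp (-t) \<le> 2 - 2*t + t*t"
proof -
  have d: "\<And>x. ((\<lambda>x. 2 - 2*x + x*x - 2 * exp (-x)) has_real_derivative -2 + 2*x + 2 * exp (-x)) (at x)"
    by (rule derivative_eq_intros refl)+ (simp add: algebra_simps)
  have p: "0 \<le> -2 + 2*x + 2 * exp (-x)" if "0 \<le> x" for x :: real
    using exp_ge_add_one_self[of "-x"] by linarith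
  have h0: "(\<lambda>x::real. 2 - 2*x + x*x - 2 * exp (-x)) 0 = 0" by simp
  have "0 \<le> (\<lambda>x::real. 2 - 2*x + x*x - 2 * exp (-x)) t" by (rule nonneg_by_deriv[OF h0 d p t])
  then show ?thesis by simp
qed

lemma R2: fixes t :: real assumes t: "0 \<le> t" shows "6 - 6*t + 3*t*t - t*t*t \<le> 6 * exp (-t)"
proof -
  have d: "\<And>x. ((\<lambda>x. 6 * exp (-x) - (6 - 6*x + 3*x*x - x*x*x)) has_real_derivative 3 * (2 - 2*x + x*x - 2 * exp (-x))) (at x)"
    by (rule derivative_eq_intros refl)+ (simp add: algebra_simps)
  have p: "0 \<le> 3 * (2 - 2*x + x*x - 2 * exp (-x))" if "0 \<le> x" for x :: real
    using R1[OF that] by (intro mult_nonneg_nonneg) linarith+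
  have h0: "(\<lambda>x::real. 6 * exp (-x) - (6 - 6*x + 3*x*x - x*x*x)) 0 = 0" by simp
  have "0 \<le> (\<lambda>x::real. 6 * exp (-x) - (6 - 6*x + 3*x*x - x*x*x)) t" by (rule nonneg_by_deriv[OF h0 d p t])
  then show ?thesis by simp
qed

lemma R3: fixes t :: real assumes t: "0 \<le> t" shows "24 * exp (-t) \<le> 24 - 24*t + 12*t*t - 4*t*t*t + t*t*t*t"
proof -
  have d: "\<And>x. ((\<lambda>x. 24 - 24*x + 12*x*x - 4*x*x*x + x*x*x*x - 24 * exp (-x)) has_real_derivative 4 * (6 * exp (-x) - (6 - 6*x + 3*x*x - x*x*x))) (at x)"
    by (rule derivative_eq_intros refl)+ (simp add: algebra_simps)
  have p: "0 \<le> 4 * (6 * exp (-x) - (6 - 6*x + 3*x*x - x*x*x))" if "0 \<le> x" for x :: real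
    using R2[OF that] by (intro mult_nonneg_nonneg) linarith+
  have h0: "(\<lambda>x::real. 24 - 24*x + 12*x*x - 4*x*x*x + x*x*x*x - 24 * exp (-x)) 0 = 0" by simp
  have "0 \<le> (\<lambda>x::real. 24 - 24*x + 12*x*x - 4*x*x*x + x*x*x*x - 24 * exp (-x)) t" by (rule nonneg_by_deriv[OF h0 d p t])
  then show ?thesis by simp
qed

lemma Rk: fixes y :: real assumes t: "0 \<le> y" shows "0 \<le> 2 + y - (2 - y) * exp y"
proof -
  have d: "\<And>x. ((\<lambda>y. 2 + y - (2 - y) * exp y) has_real_derivative 1 - (1 - x) * exp x) (at x)"
    by (auto intro!: derivative_eq_intros simp: field_simps)
  have p: "0 \<le> 1 - (1 - x) * exp x" if "0 \<le> x" for x :: real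
  proof -
    have "1 - x \<le> exp (-x)" using exp_ge_add_one_self[of "-x"] by linarith
    then have "(1 - x) * exp x \<le> exp (-x) * exp x" by (rule mult_right_mono) simp
    also have "\<dots> = 1" by (simp add: exp_minus field_simps)
    finally show "0 \<le> 1 - (1 - x) * exp x" by linarith
  qed
  show ?thesis using nonneg_by_deriv[of "\<lambda>y. 2 + y - (2 - y) * exp y", OF _ d p t] by simp
qed

lemma df: "(frak_f has_real_derivative 1 - exp (-x)) (at x)"
proof -
  have "((\<lambda>x. exp (- x) - 1 + x) has_real_derivative 1 - exp (-x)) (at x)"
    by (auto intro!: derivative_eq_intros)
  moreover have "frak_f = (\<lambda>x. exp (- x) - 1 + x)" by (simp add: fun_eq_iff frak_f_def)
  ultimately show ?thesis by simp
qed
lemma dg: "((\<lambda>x. x^2) has_real_derivative 2 * x) (at x)"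
      by (auto intro!: derivative_eq_intros)


lemma R4:
  assumes "0 < y" "y \<le> t"
  shows "y^2 * frak_f t \<le> t^2 * frak_f y"
proof -
  define g' where "g' = (\<lambda>x::real. - (((1 - exp (-x)) * x^2 - frak_f x * (2 * x)) / (x^2 * x^2)))"
  have d: "((\<lambda>x. - (frak_f x / x^2)) has_real_derivative g' x) (at x)" if x: "x \<in> {y..t}" for x
  proof -
    have xp: "x \<noteq> 0" using assms x by auto
    have "((\<lambda>x. frak_f x / x^2) has_real_derivative ((1 - exp (-x)) * x^2 - frak_f x * (2 * x)) / (x^2 * x^2)) (at x)"
      by (rule DERIV_divide[OF df dg]) (use xp in simp)
    then show ?thesis unfolding g'_def by (rule DERIV_minus)
  qed
  have p: "0 \<le> g' x" if x: "x \<in> {y..t}" for x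
  proof -
    have xp: "x > 0" using x assms by auto
    have k: "0 \<le> 2 + x - (2 - x) * exp x" using Rk[of x] xp by simp
    have "x * (exp x - 1) - 2 * (1 - exp x + x * exp x) \<le> 0" using k by (simp add: algebra_simps)
    then have "exp (-x) * (x * (exp x - 1) - 2 * (1 - exp x + x * exp x)) \<le> 0"
      by (simp add: mult_nonneg_nonpos)
    moreover have "x * (1 - exp (-x)) - 2 * frak_f x = exp (-x) * (x * (exp x - 1) - 2 * (1 - exp x + x * exp x))"
      unfolding frak_f_def by (simp add: exp_minus field_simps)
    ultimately have "x * (1 - exp (-x)) - 2 * frak_f x \<le> 0" by simp
    then have "x * (x * (1 - exp (-x)) - 2 * frak_f x) \<le> 0"
      using xp by (simp add: mult_nonneg_nonpos)
    then have "(1 - exp (-x)) * x^2 - frak_f x * (2 * x) \<le> 0"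
      by (simp add: power2_eq_square algebra_simps)
    then show "0 \<le> g' x" unfolding g'_def
      by (intro iffD2[OF neg_0_le_iff_le] divide_nonpos_nonneg) auto
  qed
  have "- (frak_f y / y^2) \<le> - (frak_f t / t^2)"
    using deriv_nonneg_imp_mono[of y t "\<lambda>x. - (frak_f x / x^2)" g', OF d p] assms by auto
  then have "frak_f t / t^2 \<le> frak_f y / y^2" by simp
  then have "(y^2 * t^2) * (frak_f t / t^2) \<le> (y^2 * t^2) * (frak_f y / y^2)"
    by (rule mult_left_mono) simp
  moreover have "(y^2 * t^2) * (frak_f t / t^2) = y^2 * frak_f t" using assms by simp
  moreover have "(y^2 * t^2) * (frak_f y / y^2) = t^2 * frak_f y" using assms by simp
  ultimately show ?thesis by simp
qed


lemma exp_quad: fixes x :: real assumes x: "0 \<le> x" shows "1 + x + x^2/2 \<le> exp x"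
proof -
  have d: "\<And>y. ((\<lambda>y. exp y - 1 - y - y*y/2) has_real_derivative exp y - 1 - y) (at y)"
    by (auto intro!: derivative_eq_intros)
  have p: "\<And>y::real. 0 \<le> y \<Longrightarrow> 0 \<le> exp y - 1 - y" using exp_ge_add_one_self by (metis add.commute diff_diff_eq diff_ge_0_iff_ge)
  have "0 \<le> exp x - 1 - x - x*x/2"
    using nonneg_by_deriv[of "\<lambda>y. exp y - 1 - y - y*y/2", OF _ d p x] by simp
  then show ?thesis by (simp add: power2_eq_square)
qed

lemma key_real:
  fixes a t e P N R s :: real
  assumes a: "a > 0" and t: "0 < t" "t \<le> 1/20" and e: "e \<ge> 0"
    and P: "0 \<le> P" "P \<le> a^2" and N: "0 \<le> N" "N \<le> a^2" and R: "0 \<le> R"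
    and s: "s^2 \<le> P" and NsR: "N \<le> a * (s + R)"
  shows "exp (frak_f t / a^2 * (P + N)) \<le> 1 + t / a * e + frak_f t / a^2 * (P + N)
           + ((t / a)^2 / 2 - frak_f t / a^2) * P + frak_f t / a^2 * a * R"
proof -
  define F where "F = frak_f t"
  have F0: "0 \<le> F" unfolding F_def frak_f_def using exp_ge_add_one_self[of "-t"] by linarith
  have F1: "F \<le> t*t/2" unfolding F_def frak_f_def using R1[of t] t by linarith
  have F2: "F \<le> t*t/2 - t*t*t/6 + t*t*t*t/24" unfolding F_def frak_f_def using R3[of t] t by linarith
  have tt: "t * t \<le> 1/400" using t mult_mono[of t "1/20" t "1/20"] by auto
  have F4: "4 * F \<le> 1" using F1 tt by linarith
  have F10: "10 * F^2 \<le> t*t/2 - F"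
  proof -
    have "F^2 \<le> (t*t/2)^2" using F0 F1 by (simp add: power_mono)
    then have "10 * F^2 \<le> 10 * (t*t/2)^2" by simp
    moreover have "10 * (t*t/2)^2 + t*t*t*t/24 \<le> t*t*t/6"
    proof -
      have "t * (10/4 + 1/24) \<le> 1/6" using t by simp
      then have "(t*t*t) * (t * (10/4 + 1/24)) \<le> (t*t*t) * (1/6)"
        using t by (intro mult_left_mono) auto
      then show ?thesis by (simp add: power2_eq_square algebra_simps)
    qed
    ultimately show ?thesis using F2 by linarith
  qed
  have a2: "a^2 > 0" using a by simp
  have Nsq: "N^2 \<le> 4 * a^2 * P + 2 * a^3 * R"
  proof (cases "s \<le> R")
    case True
    have "a * (s + R) \<le> a * (R + R)" using True a by (intro mult_left_mono) auto
    then have "N \<le> 2 * a * R" using NsR by (simp add: algebra_simps)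
    have "N^2 = N * N" by (simp add: power2_eq_square)
    also have "\<dots> \<le> a^2 * N" using N by (simp add: mult_right_mono)
    also have "\<dots> \<le> a^2 * (2 * a * R)" using \<open>N \<le> 2 * a * R\<close> a2 by simp
    finally have "N^2 \<le> 2 * a^3 * R" by (simp add: power3_eq_cube power2_eq_square algebra_simps)
    moreover have "0 \<le> 4 * a^2 * P" using P by simp
    ultimately show ?thesis by linarith
  next
    case False
    have "a * (s + R) \<le> a * (s + s)" using False a by (intro mult_left_mono) auto
    then have "N \<le> 2 * a * s" using NsR by (simp add: algebra_simps)
    then have "N^2 \<le> (2 * a * s)^2" using N by (simp add: power_mono)
    also have "\<dots> = 4 * a^2 * s^2" by (simp add: power_mult_distrib)
    also have "\<dots> \<le> 4 * a^2 * P" using s a2 by simp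
    finally have "N^2 \<le> 4 * a^2 * P" .
    moreover have "0 \<le> 2 * a^3 * R" using a R by simp
    ultimately show ?thesis by linarith
  qed
  have Psq: "P^2 \<le> a^2 * P" using mult_right_mono[OF P(2) P(1)] by (simp add: power2_eq_square)
  have PN: "(P + N)^2 \<le> 10 * a^2 * P + 4 * a^3 * R"
  proof -
    have "2 * P^2 + 2 * N^2 - (P + N)^2 = (P - N)^2" by (simp add: power2_eq_square algebra_simps)
    then have "(P + N)^2 \<le> 2 * P^2 + 2 * N^2" by (metis diff_ge_0_iff_ge zero_le_power2)
    then show ?thesis using Psq Nsq by linarith
  qed
  define x where "x = F / a^2 * (P + N)"
  have x0: "0 \<le> x" unfolding x_def using F0 P N a by simp
  have x1: "x \<le> 1"
  proof -
    have "P + N \<le> 2 * a^2" using P N by simp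
    then have "x \<le> F / a^2 * (2 * a^2)" unfolding x_def using F0 a2
      by (intro mult_left_mono) auto
    also have "\<dots> = 2 * F" using a2 by simp
    finally show ?thesis using F4 F0 by linarith
  qed
  have "exp x \<le> 1 + x + x^2" using exp_bound x0 x1 by blast
  moreover have "x^2 \<le> ((t / a)^2 / 2 - F / a^2) * P + F / a^2 * a * R"
  proof -
    have "x^2 = F^2 / (a^2)^2 * (P + N)^2" unfolding x_def by (simp add: power_mult_distrib power_divide)
    also have "\<dots> \<le> F^2 / (a^2)^2 * (10 * a^2 * P + 4 * a^3 * R)"
      using PN by (intro mult_left_mono) auto
    also have "\<dots> = (10 * F^2) / a^2 * P + (4 * F) * F / a * R"
      using a by (simp add: field_simps power2_eq_square power3_eq_cube)
    also have "\<dots> \<le> (t*t/2 - F) / a^2 * P + 1 * F / a * R"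
    proof (rule add_mono)
      show "10 * F\<^sup>2 / a\<^sup>2 * P \<le> (t * t / 2 - F) / a\<^sup>2 * P"
        using F10 P a2 by (intro mult_right_mono divide_right_mono) auto
      show "4 * F * F / a * R \<le> 1 * F / a * R"
        using F4 F0 R a by (intro mult_right_mono divide_right_mono mult_right_mono) auto
    qed
    also have "\<dots> = ((t / a)^2 / 2 - F / a^2) * P + F / a^2 * a * R"
      using a by (simp add: field_simps power2_eq_square)
    finally show ?thesis .
  qed
  moreover have "0 \<le> t / a * e" using t a e by simp
  ultimately show ?thesis unfolding x_def F_def by linarith
qed


lemma pointwise:
  fixes a t d :: real
  assumes a: "a > 0" and t: "0 < t"
  shows "1 + t/a*d + frak_f t/a^2 * (if \<bar>d\<bar> \<le> a then d^2 else 0)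
     + ((t/a)^2/2 - frak_f t/a^2) * (if 0 \<le> d \<and> d \<le> a then d else 0)^2
     + frak_f t/a^2 * a * (if a < d then d else 0)
   \<le> exp (t/a*d + frak_f t/a^2 * a * (if a \<le> \<bar>d\<bar> then \<bar>d\<bar> else 0))"
proof -
  define F where "F = frak_f t"
  define l where "l = t / a"
  define c where "c = F / a^2"
  have F0: "0 \<le> F" unfolding F_def frak_f_def using exp_ge_add_one_self[of "-t"] by linarith
  have F1: "F \<le> t*t/2" unfolding F_def frak_f_def using R1[of t] t by linarith
  have c0: "0 \<le> c" unfolding c_def using F0 by simp
  have l0: "0 < l" unfolding l_def using a t by simp
  have la: "l * a = t" unfolding l_def using a by simp
  have ca2: "c * a^2 = F" unfolding c_def using a by simp
  have goal: "1 + l*d + c * (if \<bar>d\<bar> \<le> a then d^2 else 0)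
     + (l^2/2 - c) * (if 0 \<le> d \<and> d \<le> a then d else 0)^2
     + c * a * (if a < d then d else 0)
   \<le> exp (l*d + c * a * (if a \<le> \<bar>d\<bar> then \<bar>d\<bar> else 0))"
  proof (cases "a < d")
    case True
    then have "\<bar>d\<bar> = d" using a by simp
    then show ?thesis using True exp_ge_add_one_self[of "l*d + c*a*d"] by (simp add: algebra_simps)
  next
    case nlt: False
    show ?thesis
    proof (cases "d = a")
      case True
      have e: "1 + t + t^2/2 \<le> exp (t + F)"
      proof -
        have "1 + t + t^2/2 \<le> 1 + (t + F) + (t + F)^2/2"
        proof -
          have "(t + F)^2 = t^2 + 2*t*F + F^2" by (simp add: power2_eq_square algebra_simps)
          moreover have "0 \<le> t*F" "0 \<le> F^2" using F0 t by auto
          ultimately show ?thesis using F0 by linarith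
        qed
        also have "\<dots> \<le> exp (t + F)" using exp_quad[of "t + F"] F0 t by simp
        finally show ?thesis .
      qed
      have "l^2 * a^2 = t^2" using la by (metis power_mult_distrib)
      then have "1 + l*d + c * d^2 + (l^2/2 - c) * d^2 = 1 + t + t^2/2"
        using True la ca2 by (simp add: algebra_simps)
      moreover have "l*d + c * a * \<bar>d\<bar> = t + F"
        using True la ca2 a by (simp add: power2_eq_square algebra_simps)
      ultimately show ?thesis using True e a by simp
    next
      case False
      with nlt have dlt: "d < a" by simp
      show ?thesis
      proof (cases "0 \<le> d")
        case True
        have "1 + l*d + (l*d)^2/2 \<le> exp (l*d)" using exp_quad[of "l*d"] True l0 by simp
        moreover have "1 + l*d + c * d^2 + (l^2/2 - c) * d^2 = 1 + l*d + (l*d)^2/2"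
          by (simp add: power2_eq_square algebra_simps)
        ultimately show ?thesis using True dlt by simp
      next
        case dneg: False
        show ?thesis
        proof (cases "-a < d")
          case True
          define y where "y = - (l * d)"
          have y0: "0 < y" unfolding y_def using l0 dneg by (simp add: mult_pos_neg)
          have yt: "y \<le> t" unfolding y_def using True la l0
            by (metis minus_less_iff mult_less_cancel_left_pos mult.commute mult_minus_right less_eq_real_def)
          have "y^2 * F \<le> t^2 * frak_f y" using R4[OF y0 yt] unfolding F_def .
          moreover have "y^2 * F = t^2 * (c * d^2)"
            unfolding y_def c_def using la a by (simp add: field_simps power2_eq_square)
          ultimately have "t^2 * (c * d^2) \<le> t^2 * frak_f y" by simp
          then have "c * d^2 \<le> frak_f y" using t by simp
          also have "frak_f y = exp (l * d) - 1 - l * d" unfolding frak_f_def y_def by simp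
          finally have "1 + l*d + c * d^2 \<le> exp (l*d)" by simp
          then show ?thesis using True dneg dlt by simp
        next
          case False
          then have dle: "d \<le> -a" by simp
          show ?thesis
          proof (cases "d = -a")
            case True
            have "c * a * \<bar>d\<bar> = F" using True ca2 a by (simp add: power2_eq_square)
            moreover have "c * d^2 = F" using True ca2 by simp
            moreover have "l * d = - t" using True la by simp
            moreover have "1 - t + F \<le> exp (F - t)" using exp_ge_add_one_self[of "F - t"] by linarith
            ultimately show ?thesis using True a by simp
          next
            case False
            then have "d < -a" using dle by simp
            then have "0 \<le> c * a * \<bar>d\<bar>" using c0 a by (intro mult_nonneg_nonneg) auto
            then have "1 + l*d \<le> exp (l*d + c * a * \<bar>d\<bar>)" using exp_ge_add_one_self[of "l*d + c*a*\<bar>d\<bar>"] by linarith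
            then show ?thesis using \<open>d < -a\<close> a by simp
          qed
        qed
      qed
    qed
  qed
  then show ?thesis unfolding l_def c_def F_def .
qed


theorem proposition2p2:
  fixes M :: "'a measure" and F :: "nat \<Rightarrow> 'a measure" and X :: "nat \<Rightarrow> 'a \<Rightarrow> real"
    and \<alpha> :: real
  assumes "prob_space M"
    and "filtration M F"
    and "submartingale M F X"
    and "\<forall>x\<in>space M. X 0 x = 0"
    and "\<alpha> > 0"
    and "\<forall>n. integrable M (\<lambda>x. exp (\<alpha> * (\<Sum>k\<in>{1..n}. \<bar>incr X k x\<bar>)))"
  shows "\<forall>a>0. \<exists>l0>0. \<forall>l. 0 < l \<and> l < l0 \<longrightarrow>
           submartingale M F
             (\<lambda>n x. exp (l * X n x - frak_f (l * a) / a\<^sup>2 * G M F X a n x))"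
proof -
  interpret P: prob_space M by fact
  have subF: "subalgebra M (F n)" for n using assms(2) unfolding filtration_def by auto
  have sfs: "sigma_finite_subalgebra M (F n)" for n
    by (rule finite_measure_subalgebra_is_sigma_finite)
       (simp add: finite_measure_subalgebra_def finite_measure_subalgebra_axioms_def subF P.finite_measure_axioms)
  have spF: "space (F n) = space M" for n using subF unfolding subalgebra_def by auto
  have monoF: "sets (F i) \<subseteq> sets (F j)" if "i \<le> j" for i j
    using lift_Suc_mono_le[of "\<lambda>n. sets (F n)", OF _ that] assms(2) unfolding filtration_def by auto
  have subij: "subalgebra (F j) (F i)" if "i \<le> j" for i j
    using monoF[OF that] spF unfolding subalgebra_def by auto
  have lift: "f \<in> borel_measurable (F j)" if "i \<le> j" "f \<in> borel_measurable (F i)" for f :: "'a \<Rightarrow> real" and i j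
    using measurable_from_subalg[OF subij[OF that(1)] that(2)] .
  have toM: "f \<in> borel_measurable M" if "f \<in> borel_measurable (F i)" for f :: "'a \<Rightarrow> real" and i
    using measurable_from_subalg[OF subF that] .
  have Xm: "X n \<in> borel_measurable (F n)" for n using assms(3) unfolding submartingale_def by auto
  have Xi: "integrable M (X n)" for n using assms(3) unfolding submartingale_def by auto
  have incr_eq: "incr X i = (\<lambda>x. X i x - X (i - 1) x)" for i by (simp add: fun_eq_iff incr_def)
  have Dm: "incr X i \<in> borel_measurable (F j)" if "i \<le> j" for i j
  proof -
    have [measurable]: "X i \<in> borel_measurable (F j)" by (rule lift[OF that Xm])
    have [measurable]: "X (i - 1) \<in> borel_measurable (F j)" by (rule lift[OF _ Xm]) (use that in simp)
    show ?thesis unfolding incr_eq by measurable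
  qed
  have DM: "incr X i \<in> borel_measurable M" for i using toM[OF Dm[OF le_refl]] .
  have Di: "integrable M (incr X i)" for i
    unfolding incr_eq by (intro Bochner_Integration.integrable_diff Xi)
  have Xbound: "\<bar>X n x\<bar> \<le> (\<Sum>k\<in>{1..n}. \<bar>incr X k x\<bar>)" if x: "x \<in> space M" for n x
  proof (induction n)
    case 0
    then show ?case using assms(4) x by simp
  next
    case (Suc n)
    have "X (Suc n) x = X n x + incr X (Suc n) x" by (simp add: incr_def)
    then have "\<bar>X (Suc n) x\<bar> \<le> \<bar>X n x\<bar> + \<bar>incr X (Suc n) x\<bar>" by simp
    then show ?case using Suc by simp
  qed
  show ?thesis
  proof (intro allI impI)
    fix a :: real
    assume a: "a > 0"
    define l0 where "l0 = min (\<alpha> / 2) (1 / (20 * a))"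
    have l0p: "l0 > 0" unfolding l0_def using a assms(5) by simp
    show "\<exists>l0>0. \<forall>l. 0 < l \<and> l < l0 \<longrightarrow>
           submartingale M F (\<lambda>n x. exp (l * X n x - frak_f (l * a) / a\<^sup>2 * G M F X a n x))"
    proof (intro exI[of _ l0] conjI allI impI l0p)
      fix l :: real
      assume "0 < l \<and> l < l0"
      then have l0: "0 < l" and ll0: "l < l0" by auto
      define t where "t = l * a"
      have lt: "t / a = l" unfolding t_def using a by simp
      have t0: "0 < t" unfolding t_def using a l0 by simp
      have t1: "t \<le> 1/20"
      proof -
        have "l < 1 / (20 * a)" using ll0 unfolding l0_def by simp
        then have "l * (20 * a) < 1" using a by (simp add: field_simps)
        then show ?thesis unfolding t_def by simp
      qed
      define c where "c = frak_f (l * a) / a^2"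
      have ct: "frak_f t / a^2 = c" unfolding c_def t_def ..
      have Fv0: "0 \<le> frak_f t" unfolding frak_f_def using exp_ge_add_one_self[of "-t"] by linarith
      have Fv1: "frak_f t \<le> t*t/2" unfolding frak_f_def using R1[of t] t0 by linarith
      have c0: "0 \<le> c" unfolding ct[symmetric] using Fv0 by simp
      have ca: "c * a \<le> l"
      proof -
        have "c * a = frak_f t / a" unfolding ct[symmetric] using a by (simp add: power2_eq_square)
        also have "\<dots> \<le> (t*t/2) / a" by (rule divide_right_mono[OF Fv1]) (use a in simp)
        also have "\<dots> = l * (t / 2)" unfolding t_def using a by (simp add: field_simps)
        also have "\<dots> \<le> l * 1" using t1 l0 by (intro mult_left_mono) auto
        finally show ?thesis by simp
      qed
      have lca: "l + c * a \<le> \<alpha>" using ca ll0 unfolding l0_def by linarith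
      define Qf where "Qf = (\<lambda>i y. (incr X i y)\<^sup>2 * indicator {y. \<bar>incr X i y\<bar> \<le> a} y)"
      define Ef where "Ef = (\<lambda>i y. \<bar>incr X i y\<bar> * indicator {y. \<bar>incr X i y\<bar> \<ge> a} y)"
      define V where "V = (\<lambda>i. real_cond_exp M (F (i - 1)) (Qf i))"
      define Gs where "Gs = (\<lambda>n x. (\<Sum>i\<in>{1..n}. V i x) - a * (\<Sum>i\<in>{1..n}. Ef i x))"
      define Y where "Y = (\<lambda>n x. exp (l * X n x - c * Gs n x))"
      have Geq: "G M F X a n x = Gs n x" for n x by (simp add: G_def Gs_def V_def Qf_def Ef_def)
      have goalY: "(\<lambda>n x. exp (l * X n x - frak_f (l * a) / a\<^sup>2 * G M F X a n x)) = Y"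
        by (simp add: fun_eq_iff Y_def Geq c_def)
      have Qif: "Qf i y = (if \<bar>incr X i y\<bar> \<le> a then (incr X i y)\<^sup>2 else 0)" for i y
        by (simp add: Qf_def split: split_indicator)
      have Eif: "Ef i y = (if a \<le> \<bar>incr X i y\<bar> then \<bar>incr X i y\<bar> else 0)" for i y
        by (simp add: Ef_def split: split_indicator)
      have Qm: "Qf i \<in> borel_measurable (F j)" if "i \<le> j" for i j
      proof -
        have [measurable]: "incr X i \<in> borel_measurable (F j)" using Dm[OF that] .
        have "Qf i = (\<lambda>y. if \<bar>incr X i y\<bar> \<le> a then (incr X i y)\<^sup>2 else 0)" using Qif by auto
        then show ?thesis by simp
      qed
      have Em: "Ef i \<in> borel_measurable (F j)" if "i \<le> j" for i j
      proof -
        have [measurable]: "incr X i \<in> borel_measurable (F j)" using Dm[OF that] .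
        have "Ef i = (\<lambda>y. if a \<le> \<bar>incr X i y\<bar> then \<bar>incr X i y\<bar> else 0)" using Eif by auto
        then show ?thesis by simp
      qed
      have QM: "Qf i \<in> borel_measurable M" for i using toM[OF Qm[OF le_refl]] .
      have Vm: "V i \<in> borel_measurable (F j)" if "i - 1 \<le> j" for i j
        unfolding V_def by (rule lift[OF that]) simp
      have Gm: "Gs n \<in> borel_measurable (F n)" for n
      proof -
        have [measurable]: "V i \<in> borel_measurable (F n)" if "i \<in> {1..n}" for i
          by (rule Vm) (use that in auto)
        have [measurable]: "Ef i \<in> borel_measurable (F n)" if "i \<in> {1..n}" for i
          using Em that by simp
        show ?thesis unfolding Gs_def by measurable
      qed
      have Ym: "Y n \<in> borel_measurable (F n)" for n
      proof -
        have [measurable]: "Gs n \<in> borel_measurable (F n)" "X n \<in> borel_measurable (F n)" using Gm Xm by auto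
        show ?thesis unfolding Y_def by measurable
      qed
      have YM: "Y n \<in> borel_measurable M" for n using toM[OF Ym] .
      have Qb: "\<bar>Qf i y\<bar> \<le> a^2" for i y
      proof -
        have "\<bar>incr X i y\<bar> \<le> a \<Longrightarrow> (incr X i y)\<^sup>2 \<le> a^2"
          by (metis abs_le_square_iff abs_of_pos a)
        then show ?thesis unfolding Qif by auto
      qed
      have Qi: "integrable M (Qf i)" for i
        by (rule P.integrable_const_bound[where B = "a^2"]) (use Qb QM in auto)
      have Vpos: "AE x in M. \<forall>i. 0 \<le> V i x"
        unfolding AE_all_countable V_def
        by (intro allI sigma_finite_subalgebra.real_cond_exp_pos[OF sfs]) (auto simp: Qf_def QM[unfolded Qf_def])
      have Vle: "AE x in M. V i x \<le> a^2" for i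
        unfolding V_def
        by (intro sigma_finite_subalgebra.real_cond_exp_le_c[OF sfs] Qi) (use Qb in \<open>auto simp: abs_le_iff\<close>)
      have Ebd: "Ef i x \<le> \<bar>incr X i x\<bar>" "0 \<le> Ef i x" for i x unfolding Eif by auto
      have Yi: "integrable M (Y n)" for n
      proof (rule Bochner_Integration.integrable_bound[OF assms(6)[rule_format, of n] YM])
        show "AE x in M. norm (Y n x) \<le> norm (exp (\<alpha> * (\<Sum>k\<in>{1..n}. \<bar>incr X k x\<bar>)))"
          using Vpos AE_space
        proof eventually_elim
          case (elim x)
          define S where "S = (\<Sum>k\<in>{1..n}. \<bar>incr X k x\<bar>)"
          have S0: "0 \<le> S" unfolding S_def by (simp add: sum_nonneg)
          have "X n x \<le> S" using Xbound[OF elim(2), of n] unfolding S_def by linarith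
          then have e1: "l * X n x \<le> l * S" using l0 by (simp add: mult_left_mono)
          have "0 \<le> (\<Sum>i\<in>{1..n}. V i x)" using elim(1) by (simp add: sum_nonneg)
          then have e2: "0 \<le> c * (\<Sum>i\<in>{1..n}. V i x)" using c0 by simp
          have "(\<Sum>i\<in>{1..n}. Ef i x) \<le> S" unfolding S_def by (rule sum_mono) (rule Ebd(1))
          then have e3: "c * a * (\<Sum>i\<in>{1..n}. Ef i x) \<le> c * a * S" using c0 a by (simp add: mult_left_mono)
          have e4: "(l + c * a) * S \<le> \<alpha> * S" using lca S0 by (rule mult_right_mono)
          have "l * X n x - c * Gs n x = l * X n x - c * (\<Sum>i\<in>{1..n}. V i x) + c * a * (\<Sum>i\<in>{1..n}. Ef i x)"
            unfolding Gs_def by (simp add: algebra_simps)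
          also have "\<dots> \<le> \<alpha> * S" using e1 e2 e3 e4 by (simp add: algebra_simps)
          finally have "Y n x \<le> exp (\<alpha> * S)" unfolding Y_def by simp
          moreover have "0 < Y n x" unfolding Y_def by simp
          ultimately show ?case unfolding S_def by simp
        qed
      qed
      show "submartingale M F (\<lambda>n x. exp (l * X n x - frak_f (l * a) / a\<^sup>2 * G M F X a n x))"
        unfolding goalY submartingale_def
      proof (intro conjI allI impI Ym Yi)
        fix n :: nat
        assume "n \<ge> 1"
        then obtain m where nm: "n = Suc m" by (cases n) auto
        let ?CE = "real_cond_exp M (F m)"
        interpret S: sigma_finite_subalgebra M "F m" by (rule sfs)
        define D where "D = incr X (Suc m)"
        define Z where "Z = (\<lambda>x. exp (l * D x + c * a * Ef (Suc m) x))"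
        define W where "W = (\<lambda>x. exp (- c * V (Suc m) x) * Z x)"
        have VS: "V (Suc m) = ?CE (Qf (Suc m))" by (simp add: V_def)
        have [measurable]: "D \<in> borel_measurable M" unfolding D_def by (rule DM)
        have [measurable]: "Ef (Suc m) \<in> borel_measurable M" by (rule toM[OF Em[OF le_refl]])
        have [measurable]: "V (Suc m) \<in> borel_measurable (F m)" by (rule Vm) simp
        have [measurable]: "V (Suc m) \<in> borel_measurable M" by (rule toM[OF Vm[of "Suc m" m]]) simp
        have Zm [measurable]: "Z \<in> borel_measurable M" unfolding Z_def by measurable
        have Wm [measurable]: "W \<in> borel_measurable M" unfolding W_def by measurable
        have Ysplit: "Y (Suc m) x = Y m x * W x" for x
        proof -
          have g: "Gs (Suc m) x = Gs m x + V (Suc m) x - a * Ef (Suc m) x"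
            unfolding Gs_def by (simp add: algebra_simps)
          have xx: "X (Suc m) x = X m x + D x" unfolding D_def by (simp add: incr_def)
          have eq: "l * X (Suc m) x - c * Gs (Suc m) x
              = (l * X m x - c * Gs m x) + (- c * V (Suc m) x + (l * D x + c * a * Ef (Suc m) x))"
            unfolding g xx by (simp add: algebra_simps)
          have e: "exp (l * X (Suc m) x - c * Gs (Suc m) x) = exp (l * X m x - c * Gs m x) * (exp (- c * V (Suc m) x) * exp (l * D x + c * a * Ef (Suc m) x))"
            unfolding eq exp_add by (rule refl)
          show ?thesis unfolding Y_def W_def Z_def by (rule e)
        qed
        have incrY: "incr Y n = (\<lambda>x. Y m x * (W x - 1))"
          unfolding nm by (simp add: fun_eq_iff incr_def Ysplit algebra_simps)
        have prodint: "integrable M (\<lambda>x. Y m x * (W x - 1))"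
        proof -
          have "integrable M (\<lambda>x. Y (Suc m) x - Y m x)" by (intro Bochner_Integration.integrable_diff Yi)
          moreover have "(\<lambda>x. Y (Suc m) x - Y m x) = (\<lambda>x. Y m x * (W x - 1))"
            by (simp add: fun_eq_iff Ysplit algebra_simps)
          ultimately show ?thesis by simp
        qed
        have Dsum: "\<bar>D x\<bar> \<le> (\<Sum>k\<in>{1..Suc m}. \<bar>incr X k x\<bar>)" for x
          unfolding D_def by (rule member_le_sum) auto
        have Zb: "Z x \<le> exp (\<alpha> * (\<Sum>k\<in>{1..Suc m}. \<bar>incr X k x\<bar>))" for x
        proof -
          have "l * D x \<le> l * \<bar>D x\<bar>" using l0 by (simp add: mult_left_mono)
          moreover have "c * a * Ef (Suc m) x \<le> c * a * \<bar>D x\<bar>"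
            using Ebd(1)[of "Suc m" x] c0 a unfolding D_def by (simp add: mult_left_mono)
          moreover have "(l + c * a) * \<bar>D x\<bar> \<le> \<alpha> * \<bar>D x\<bar>" using lca by (simp add: mult_right_mono)
          moreover have "\<alpha> * \<bar>D x\<bar> \<le> \<alpha> * (\<Sum>k\<in>{1..Suc m}. \<bar>incr X k x\<bar>)"
            using Dsum assms(5) by (simp add: mult_left_mono)
          ultimately have "l * D x + c * a * Ef (Suc m) x \<le> \<alpha> * (\<Sum>k\<in>{1..Suc m}. \<bar>incr X k x\<bar>)"
            by (simp add: algebra_simps)
          then show ?thesis unfolding Z_def by simp
        qed
        have Zi: "integrable M Z"
        proof (rule Bochner_Integration.integrable_bound[OF assms(6)[rule_format, of "Suc m"] Zm])
          have Zn: "norm (Z x) \<le> norm (exp (\<alpha> * (\<Sum>k\<in>{1..Suc m}. \<bar>incr X k x\<bar>)))" for x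
          proof -
            have "0 < Z x" unfolding Z_def by simp
            then show ?thesis using Zb[of x] by (simp only: real_norm_def abs_exp_cancel)
          qed
          show "AE x in M. norm (Z x) \<le> norm (exp (\<alpha> * (\<Sum>k\<in>{1..Suc m}. \<bar>incr X k x\<bar>)))"
            by (rule AE_I2) (rule Zn)
        qed
        have Wi: "integrable M W"
        proof (rule Bochner_Integration.integrable_bound[OF Zi Wm])
          show "AE x in M. norm (W x) \<le> norm (Z x)"
            using Vpos
          proof eventually_elim
            case (elim x)
            have "exp (- c * V (Suc m) x) \<le> 1" using elim c0 by (simp add: mult_nonneg_nonneg)
            then have "W x \<le> Z x" unfolding W_def Z_def by simp
            then show ?case unfolding W_def Z_def by simp
          qed
        qed
        have KEY: "AE x in M. exp (c * V (Suc m) x) \<le> ?CE Z x"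
        proof -
          define S where "S = (\<lambda>x. if 0 \<le> D x \<and> D x \<le> a then D x else 0)"
          define Pp where "Pp = (\<lambda>x. (S x)^2)"
          define Nn where "Nn = (\<lambda>x. if -a \<le> D x \<and> D x < 0 then (D x)^2 else 0)"
          define Rr where "Rr = (\<lambda>x. if a < D x then D x else 0)"
          define \<kappa> where "\<kappa> = l^2/2 - c"
          define Q where "Q = Qf (Suc m)"
          define L1 where "L1 = (\<lambda>x. 1 + l * D x)"
          define L2 where "L2 = (\<lambda>x. L1 x + c * Q x)"
          define L3 where "L3 = (\<lambda>x. L2 x + \<kappa> * Pp x)"
          define Lb where "Lb = (\<lambda>x. L3 x + c * a * Rr x)"
          have Sm [measurable]: "S \<in> borel_measurable M" unfolding S_def by measurable
          have [measurable]: "Pp \<in> borel_measurable M" unfolding Pp_def by measurable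
          have [measurable]: "Nn \<in> borel_measurable M" unfolding Nn_def by measurable
          have [measurable]: "Rr \<in> borel_measurable M" unfolding Rr_def by measurable
          have [measurable]: "Q \<in> borel_measurable M" unfolding Q_def by (rule QM)
          have Di': "integrable M D" unfolding D_def by (rule Di)
          have bnd: "integrable M f" if "f \<in> borel_measurable M" "\<And>x. \<bar>f x\<bar> \<le> B" for f :: "'a \<Rightarrow> real" and B
            by (rule P.integrable_const_bound[where B=B]) (use that in auto)
          have Sb: "\<bar>S x\<bar> \<le> a" for x unfolding S_def using a by auto
          have Si: "integrable M S" by (rule bnd[of S a]) (auto simp: Sb)
          have Ppb: "\<bar>Pp x\<bar> \<le> a^2" for x
          proof -
            have "\<bar>S x\<bar>^2 \<le> a^2" using Sb[of x] by (intro power_mono) auto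
            then show ?thesis unfolding Pp_def by simp
          qed
          have Ppi: "integrable M Pp" by (rule bnd[of Pp "a^2"]) (auto simp: Ppb)
          have Nnb: "\<bar>Nn x\<bar> \<le> a^2" for x
          proof (cases "-a \<le> D x \<and> D x < 0")
            case True
            then have "\<bar>D x\<bar>^2 \<le> a^2" by (intro power_mono) auto
            then show ?thesis unfolding Nn_def using True by simp
          next
            case False
            then show ?thesis unfolding Nn_def if_not_P[OF False] using a by simp
          qed
          have Nni: "integrable M Nn" by (rule bnd[of Nn "a^2"]) (auto simp: Nnb)
          have Rri: "integrable M Rr"
            by (rule Bochner_Integration.integrable_bound[OF Di']) (auto simp: Rr_def)
          have Qi': "integrable M Q" unfolding Q_def by (rule Qi)
          have L1i: "integrable M L1" unfolding L1_def using Di' by auto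
          have L2i: "integrable M L2" unfolding L2_def using L1i Qi' by auto
          have L3i: "integrable M L3" unfolding L3_def using L2i Ppi by auto
          have Lbi: "integrable M Lb" unfolding Lb_def using L3i Rri by auto
          have pw: "Lb x \<le> Z x" for x
          proof -
            have Dx: "incr X (Suc m) x = D x" unfolding D_def ..
            have "Lb x = 1 + t/a*D x + frak_f t/a^2 * (if \<bar>D x\<bar> \<le> a then (D x)^2 else 0)
               + ((t/a)^2/2 - frak_f t/a^2) * (if 0 \<le> D x \<and> D x \<le> a then D x else 0)^2
               + frak_f t/a^2 * a * (if a < D x then D x else 0)"
              unfolding lt ct Lb_def L3_def L2_def L1_def Q_def Qif Dx \<kappa>_def Pp_def S_def Rr_def ..
            moreover have "Z x = exp (t/a*D x + frak_f t/a^2 * a * (if a \<le> \<bar>D x\<bar> then \<bar>D x\<bar> else 0))"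
              unfolding lt ct Z_def Eif Dx ..
            ultimately show ?thesis using pointwise[OF a t0, of "D x"] by simp
          qed
          have c1: "AE x in M. ?CE Lb x \<le> ?CE Z x"
            by (rule S.real_cond_exp_mono[OF AE_I2[OF pw] Lbi Zi])
          have a4: "AE x in M. ?CE Lb x = ?CE L3 x + ?CE (\<lambda>x. c * a * Rr x) x"
            unfolding Lb_def by (rule S.real_cond_exp_add) (use L3i Rri in auto)
          have a3: "AE x in M. ?CE L3 x = ?CE L2 x + ?CE (\<lambda>x. \<kappa> * Pp x) x"
            unfolding L3_def by (rule S.real_cond_exp_add) (use L2i Ppi in auto)
          have a2: "AE x in M. ?CE L2 x = ?CE L1 x + ?CE (\<lambda>x. c * Q x) x"
            unfolding L2_def by (rule S.real_cond_exp_add) (use L1i Qi' in auto)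
          have a1: "AE x in M. ?CE L1 x = ?CE (\<lambda>x. 1) x + ?CE (\<lambda>x. l * D x) x"
            unfolding L1_def by (rule S.real_cond_exp_add) (use Di' in auto)
          have k4: "AE x in M. ?CE (\<lambda>x. c * a * Rr x) x = c * a * ?CE Rr x"
            by (rule S.real_cond_exp_cmult[OF Rri])
          have k3: "AE x in M. ?CE (\<lambda>x. \<kappa> * Pp x) x = \<kappa> * ?CE Pp x"
            by (rule S.real_cond_exp_cmult[OF Ppi])
          have k2: "AE x in M. ?CE (\<lambda>x. c * Q x) x = c * ?CE Q x"
            by (rule S.real_cond_exp_cmult[OF Qi'])
          have k1: "AE x in M. ?CE (\<lambda>x. l * D x) x = l * ?CE D x"
            by (rule S.real_cond_exp_cmult[OF Di'])
          have one: "AE x in M. ?CE (\<lambda>x. 1) x = 1"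
            by (rule S.real_cond_exp_F_meas) auto
          have eD: "AE x in M. 0 \<le> ?CE D x"
            using assms(3) unfolding submartingale_def D_def by (metis diff_Suc_1 le_add1 plus_1_eq_Suc)
          have Qsplit: "Q = (\<lambda>x. Pp x + Nn x)"
            unfolding Q_def Pp_def S_def Nn_def fun_eq_iff Qif D_def[symmetric] by auto
          have eQ: "AE x in M. ?CE Q x = ?CE Pp x + ?CE Nn x"
            unfolding Qsplit by (rule S.real_cond_exp_add) (use Ppi Nni in auto)
          have Ppos: "AE x in M. 0 \<le> ?CE Pp x"
            by (rule S.real_cond_exp_pos) (auto simp: Pp_def)
          have Npos: "AE x in M. 0 \<le> ?CE Nn x"
            by (rule S.real_cond_exp_pos) (auto simp: Nn_def)
          have Rpos: "AE x in M. 0 \<le> ?CE Rr x"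
            by (rule S.real_cond_exp_pos) (use a in \<open>auto simp: Rr_def intro!: AE_I2\<close>)
          have Ple: "AE x in M. ?CE Pp x \<le> a^2"
            by (rule S.real_cond_exp_le_c[OF Ppi]) (use Ppb in \<open>auto simp: abs_le_iff\<close>)
          have Nle: "AE x in M. ?CE Nn x \<le> a^2"
            by (rule S.real_cond_exp_le_c[OF Nni]) (use Nnb in \<open>auto simp: abs_le_iff\<close>)
          have Jen: "AE x in M. (?CE S x)^2 \<le> ?CE Pp x"
            unfolding Pp_def
            by (rule S.real_cond_exp_jensens_inequality(2)[OF Si, of UNIV _ _ "\<lambda>x. x^2"])
               (use Ppi[unfolded Pp_def] convex_power2 in auto)
          have Nmono: "AE x in M. ?CE Nn x \<le> ?CE (\<lambda>x. a * ((S x + Rr x) - D x)) x"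
          proof (rule S.real_cond_exp_mono[OF AE_I2 Nni])
            fix x
            show "Nn x \<le> a * ((S x + Rr x) - D x)"
            proof (cases "-a \<le> D x \<and> D x < 0")
              case True
              have "(- D x) * (- D x) \<le> a * (- D x)" by (rule mult_right_mono) (use True in auto)
              then have "(D x)^2 \<le> a * (- D x)" unfolding power2_eq_square by simp
              then show ?thesis using True a unfolding Nn_def S_def Rr_def by auto
            next
              case False
              then show ?thesis using a unfolding Nn_def S_def Rr_def
                by (auto simp: mult_nonneg_nonneg mult_nonneg_nonpos)
            qed
          qed (use Si Rri Di' in auto)
          have n1: "AE x in M. ?CE (\<lambda>x. a * ((S x + Rr x) - D x)) x = a * ?CE (\<lambda>x. (S x + Rr x) - D x) x"
            by (rule S.real_cond_exp_cmult) (use Si Rri Di' in auto)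
          have n2: "AE x in M. ?CE (\<lambda>x. (S x + Rr x) - D x) x = ?CE (\<lambda>x. S x + Rr x) x - ?CE D x"
            by (rule S.real_cond_exp_diff) (use Si Rri Di' in auto)
          have n3: "AE x in M. ?CE (\<lambda>x. S x + Rr x) x = ?CE S x + ?CE Rr x"
            by (rule S.real_cond_exp_add) (use Si Rri in auto)
          show ?thesis
            using c1 a1 a2 a3 a4 k1 k2 k3 k4 one eD eQ Ppos Npos Rpos Ple Nle Jen Nmono n1 n2 n3
          proof eventually_elim
            case (elim x)
            let ?e = "?CE D x" and ?P = "?CE Pp x" and ?N = "?CE Nn x" and ?R = "?CE Rr x" and ?s = "?CE S x"
            have "a * (?s + ?R - ?e) \<le> a * (?s + ?R)" using elim(11) a by (simp add: mult_left_mono)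
            then have NsR: "?N \<le> a * (?s + ?R)" using elim(19,20,21,22) by simp
            have K: "exp (c * (?P + ?N)) \<le> 1 + l * ?e + c * (?P + ?N) + (l^2/2 - c) * ?P + c * a * ?R"
              using key_real[OF a t0 t1 elim(11) elim(13) elim(16) elim(14) elim(17) elim(15) elim(18) NsR]
              unfolding lt ct .
            have "?CE Lb x = 1 + l * ?e + c * (?P + ?N) + (l^2/2 - c) * ?P + c * a * ?R"
              using elim(2-10,12) unfolding \<kappa>_def by (simp add: algebra_simps)
            then show ?case using K elim(1) elim(12) unfolding VS Q_def by simp
          qed
        qed
        have m1: "AE x in M. ?CE (\<lambda>x. Y m x * (W x - 1)) x = Y m x * ?CE (\<lambda>x. W x - 1) x"
          by (rule S.real_cond_exp_mult) (use Ym YM Wm prodint in auto)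
        have m2: "AE x in M. ?CE (\<lambda>x. W x - 1) x = ?CE W x - ?CE (\<lambda>x. 1) x"
          by (rule S.real_cond_exp_diff) (use Wi in auto)
        have m3: "AE x in M. ?CE (\<lambda>x. 1) x = 1"
          by (rule S.real_cond_exp_F_meas) auto
        have m4: "AE x in M. ?CE W x = exp (- c * V (Suc m) x) * ?CE Z x"
          unfolding W_def by (rule S.real_cond_exp_mult) (use Wi[unfolded W_def] in auto)
        have "AE x in M. 0 \<le> ?CE (incr Y n) x"
          using m1 m2 m3 m4 KEY
        proof eventually_elim
          case (elim x)
          have "exp (- c * V (Suc m) x) * exp (c * V (Suc m) x) = 1" by (simp add: exp_minus field_simps)
          then have "1 \<le> exp (- c * V (Suc m) x) * ?CE Z x"
            using mult_left_mono[OF elim(5), of "exp (- c * V (Suc m) x)"] by simp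
          then have "0 \<le> ?CE (\<lambda>x. W x - 1) x" using elim by simp
          moreover have "0 < Y m x" unfolding Y_def by simp
          ultimately show ?case unfolding incrY using elim by simp
        qed
        then show "AE x in M. 0 \<le> real_cond_exp M (F (n - 1)) (incr Y n) x" by (simp add: nm)
      qed
    qed
  qed
qed

end
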